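(* Let $(X_n)_{n\in\mathbb{Z}}$ be i.i.d. real random variables with $\mathbb{P}(X_1<0)>0$, and let $(Y_n)_{n\in\mathbb{Z}}$ be i.i.d., independent of $(X_n)$, with $\mathbb{P}(Y_1=1)=p=1-\mathbb{P}(Y_1=-1)$, where $p\in[0,1)$. Let $W$ denote the stationary distribution of the recursion $W_{n+1}=(Y_nW_n+X_n)^+$, i.e. $W\stackrel{D}{=}(YW+X)^+$ with $W,Y,X$ independent, $Y\stackrel{D}{=}Y_1$, $X\stackrel{D}{=}X_1$. Let $S_0=0$, $S_i=X_1+\dots+X_i$, $T_n=\max_{0\le i\le n}S_i$, let $N$ be independent of $(X_n)$ with $\mathbb{P}(N=k)=(1-p)p^k$, $k\ge 0$, and $K=N+1$. Then $W\le T_K$ in distribution (i.e. $\mathbb{P}(W>x)\le\mathbb{P}(T_K>x)$ for all $x$), and $W\ge T_K-W'$ in distribution, where $W'$ is a copy of $W$ independent of $T_K$.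
   Context: Under these assumptions a stationary version of the recursion exists. $x^+=\max\{x,0\}$. *)

theory Defs
  imports "HOL-Probability.Probability"
begin

definition psum :: "(nat \<Rightarrow> 'a \<Rightarrow> real) \<Rightarrow> nat \<Rightarrow> 'a \<Rightarrow> real" where
  "psum X i \<omega> = (\<Sum>j\<in>{1..i}. X j \<omega>)"

definition runmax :: "(nat \<Rightarrow> 'a \<Rightarrow> real) \<Rightarrow> nat \<Rightarrow> 'a \<Rightarrow> real" where
  "runmax X n \<omega> = Max ((\<lambda>i. psum X i \<omega>) ` {0..n})"

text \<open>Y is encoded by a Bernoulli(p) boolean b (b = True iff Y = 1).\<close>
definition stationary_dist :: "real measure \<Rightarrow> real \<Rightarrow> real measure \<Rightarrow> bool" where
  "stationary_dist \<mu> p W \<longleftrightarrow>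
     prob_space W \<and> sets W = sets borel \<and>
     W = distr (W \<Otimes>\<^sub>M (measure_pmf (bernoulli_pmf p) \<Otimes>\<^sub>M \<mu>)) borel
            (\<lambda>(w, b, x). max ((if b then w else - w) + x) 0)"

end

theory Submission
  imports Defs
begin


definition ind :: "real \<Rightarrow> real \<Rightarrow> real" where "ind x t = (if x < t then 1 else 0)"

lemma ind_meas'[measurable (raw)]: "f \<in> borel_measurable M \<Longrightarrow> g \<in> borel_measurable M \<Longrightarrow> (\<lambda>z. ind (f z) (g z)) \<in> borel_measurable M"
  unfolding ind_def by measurable

lemma ind_bnd: "0 \<le> ind x t" "ind x t \<le> 1" "\<bar>ind x t\<bar> \<le> 1"
  by (auto simp: ind_def)

lemma intb:
  fixes f :: "'b \<Rightarrow> real"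
  assumes "prob_space A" "f \<in> borel_measurable A" "\<And>z. \<bar>f z\<bar> \<le> B"
  shows "integrable A f"
proof -
  interpret prob_space A by fact
  show ?thesis using assms(3) by (intro integrable_const_bound[where B=B]) (auto simp: assms(2))
qed

lemma surv_int:
  assumes "prob_space \<nu>" "sets \<nu> = sets borel"
  shows "measure \<nu> {x<..} = (\<integral>t. ind x t \<partial>\<nu>)"
proof -
  interpret prob_space \<nu> by fact
  have "(\<integral>t. ind x t \<partial>\<nu>) = (\<integral>t. indicator {x<..} t \<partial>\<nu>)"
    by (intro Bochner_Integration.integral_cong) (auto simp: ind_def indicator_def)
  also have "\<dots> = measure \<nu> {x<..}"
  proof -
    have "{x<..} \<in> sets \<nu>" using assms(2) by simp
    then have "{x<..} \<inter> space \<nu> = {x<..}" using sets.sets_into_space by blast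
    then show ?thesis by simp
  qed
  finally show ?thesis ..
qed

lemma fubini_swap:
  fixes F :: "'b \<Rightarrow> 'c \<Rightarrow> real"
  assumes A: "prob_space A" and B: "prob_space B"
    and F: "case_prod F \<in> borel_measurable (A \<Otimes>\<^sub>M B)" and bnd: "\<And>a b. \<bar>F a b\<bar> \<le> C"
  shows "(\<integral>a. (\<integral>b. F a b \<partial>B) \<partial>A) = (\<integral>b. (\<integral>a. F a b \<partial>A) \<partial>B)"
proof -
  interpret A: prob_space A by fact
  interpret B: prob_space B by fact
  interpret pair_prob_space A B ..
  have "integrable (A \<Otimes>\<^sub>M B) (case_prod F)"
    by (rule intb[where B=C]) (auto simp: F bnd prob_space_pair A B)
  from Fubini_integral[OF this] show ?thesis ..
qed

lemma contraction:
  fixes f g :: "real \<Rightarrow> real"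
  assumes mu: "prob_space \<mu>" "sets \<mu> = sets borel" and p: "0 \<le> p" "p < 1"
    and f: "\<And>x. 0 \<le> f x \<and> f x \<le> 1" "f \<in> borel_measurable borel"
    and g: "\<And>x. 0 \<le> g x \<and> g x \<le> 1" "g \<in> borel_measurable borel"
    and step: "\<And>x. f x - g x \<le> max 0 (p * ((\<integral>y. f (x - y) \<partial>\<mu>) - (\<integral>y. g (x - y) \<partial>\<mu>)))"
  shows "f x \<le> g x"
proof -
  interpret prob_space \<mu> by fact
  define D where "D = (SUP x. max 0 (f x - g x))"
  have bdd: "bdd_above (range (\<lambda>x. max 0 (f x - g x)))"
    using f g by (intro bdd_aboveI[where M=1]) (auto, smt (verit))
  have up: "max 0 (f z - g z) \<le> D" for z unfolding D_def by (rule cSUP_upper[OF _ bdd]) auto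
  have D0: "0 \<le> D" using up[of 0] by simp
  have fm: "(\<lambda>y. f (x - y)) \<in> borel_measurable \<mu>" for x
  proof -
    have "(\<lambda>y. f (x - y)) \<in> borel_measurable borel" using f(2) by measurable
    then show ?thesis using measurable_cong_sets[OF mu(2)] by blast
  qed
  have gm: "(\<lambda>y. g (x - y)) \<in> borel_measurable \<mu>" for x
  proof -
    have "(\<lambda>y. g (x - y)) \<in> borel_measurable borel" using g(2) by measurable
    then show ?thesis using measurable_cong_sets[OF mu(2)] by blast
  qed
  have fi: "integrable \<mu> (\<lambda>y. f (x - y))" for x
    by (rule intb[where B=1]) (use f in \<open>auto simp: mu fm\<close>)
  have gi: "integrable \<mu> (\<lambda>y. g (x - y))" for x
    by (rule intb[where B=1]) (use g in \<open>auto simp: mu gm\<close>)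
  have key: "f z - g z \<le> p * D" for z
  proof -
    have "(\<integral>y. f (z - y) \<partial>\<mu>) - (\<integral>y. g (z - y) \<partial>\<mu>) = (\<integral>y. f (z - y) - g (z - y) \<partial>\<mu>)"
      using fi gi by simp
    also have "\<dots> \<le> (\<integral>y. D \<partial>\<mu>)"
      using fi gi up by (intro integral_mono) (auto intro: order_trans[OF max.cobounded2])
    also have "\<dots> = D" by (simp add: prob_space.prob_space[OF mu(1)])
    finally have "(\<integral>y. f (z - y) \<partial>\<mu>) - (\<integral>y. g (z - y) \<partial>\<mu>) \<le> D" .
    then have "p * ((\<integral>y. f (z - y) \<partial>\<mu>) - (\<integral>y. g (z - y) \<partial>\<mu>)) \<le> p * D"
      using p by (intro mult_left_mono) auto
    then show ?thesis using step[of z] p D0 by (smt (verit) mult_nonneg_nonneg)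
  qed
  have "D \<le> p * D" unfolding D_def
    using key p D0 by (intro cSUP_least) (auto simp: D_def)
  then have "(1 - p) * D \<le> 0" by (simp add: algebra_simps)
  then have "D \<le> 0" using p by (simp add: mult_le_0_iff)
  then have "D = 0" using D0 by simp
  then show ?thesis using key[of x] by simp
qed


lemma intb_param:
  fixes F :: "'b \<Rightarrow> 'c \<Rightarrow> real"
  assumes A: "prob_space A" and B: "prob_space B"
    and F: "case_prod F \<in> borel_measurable (A \<Otimes>\<^sub>M B)" and bnd: "\<And>a b. \<bar>F a b\<bar> \<le> C"
  shows "integrable A (\<lambda>a. \<integral>b. F a b \<partial>B)"
proof -
  interpret B: prob_space B by fact
  show ?thesis
  proof (rule intb[OF A, where B=C])
    show "(\<lambda>a. \<integral>b. F a b \<partial>B) \<in> borel_measurable A"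
      by (rule B.borel_measurable_lebesgue_integral[OF F])
    fix a
    have C0: "0 \<le> C" using bnd[of a] by (meson abs_ge_zero order_trans)
    show "\<bar>\<integral>b. F a b \<partial>B\<bar> \<le> C"
    proof (cases "integrable B (F a)")
      case True
      have "\<bar>\<integral>b. F a b \<partial>B\<bar> \<le> (\<integral>b. \<bar>F a b\<bar> \<partial>B)" by (rule integral_abs_bound)
      also have "\<dots> \<le> (\<integral>b. C \<partial>B)"
        using bnd True by (intro integral_mono) auto
      also have "\<dots> = C" by (simp add: B.prob_space)
      finally show ?thesis .
    next
      case False
      then show ?thesis using C0 by (simp add: not_integrable_integral_eq)
    qed
  qed
qed

lemma sets_bb: "sets A = sets borel \<Longrightarrow> sets B = sets borel \<Longrightarrow> sets (A \<Otimes>\<^sub>M B) = sets (borel \<Otimes>\<^sub>M borel)"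
  by (intro sets_pair_measure_cong)

lemma ind_max: "0 \<le> x \<Longrightarrow> ind x (max t 0) = ind x t" by (auto simp: ind_def)

lemma stat_facts:
  assumes mu: "prob_space \<mu>" "sets \<mu> = sets borel" and p: "0 \<le> p" "p \<le> 1"
    and W: "stationary_dist \<mu> p W"
  shows "prob_space W" "sets W = sets borel" "AE w in W. 0 \<le> w"
    "x \<ge> 0 \<Longrightarrow> measure W {x<..} = p * (\<integral>y. measure W {x - y<..} \<partial>\<mu>) + (1-p) * (\<integral>w. measure \<mu> {x + w<..} \<partial>W)"
proof -
  define B where "B = measure_pmf (bernoulli_pmf p)"
  define P where "P = W \<Otimes>\<^sub>M (B \<Otimes>\<^sub>M \<mu>)"
  define h where "h = (\<lambda>(w::real, b::bool, y::real). max ((if b then w else - w) + y) 0)"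
  have pW: "prob_space W" and sW: "sets W = sets borel" and Weq: "W = distr P borel h"
    using W unfolding stationary_dist_def P_def B_def h_def by auto
  show "prob_space W" "sets W = sets borel" by fact+
  have pB: "prob_space B" unfolding B_def by (rule prob_space_measure_pmf)
  have pQ: "prob_space (B \<Otimes>\<^sub>M \<mu>)" by (rule prob_space_pair[OF pB mu(1)])
  have pP: "prob_space P" unfolding P_def by (rule prob_space_pair[OF pW pQ])
  have sB: "sets B = sets (count_space UNIV)" unfolding B_def by simp
  have sP: "sets P = sets (borel \<Otimes>\<^sub>M (count_space UNIV \<Otimes>\<^sub>M borel))"
    unfolding P_def by (intro sets_pair_measure_cong sW sB mu(2))
  have hm: "h \<in> borel_measurable P"
    unfolding h_def measurable_cong_sets[OF sP refl] by measurable
  have "AE z in P. 0 \<le> h z" unfolding h_def by auto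
  then have "AE w in distr P borel h. 0 \<le> w" using hm by (subst AE_distr_iff) auto
  then show "AE w in W. 0 \<le> w" by (simp only: Weq[symmetric])
  have AEW: "AE w in W. 0 \<le> w" by fact
  assume x: "x \<ge> 0"
  have "measure W {x<..} = (\<integral>t. ind x t \<partial>W)" by (rule surv_int[OF pW sW])
  also have "\<dots> = (\<integral>t. ind x t \<partial>distr P borel h)" by (simp only: Weq[symmetric])
  also have "\<dots> = (\<integral>z. ind x (h z) \<partial>P)" using hm by (subst integral_distr) auto
  also have "\<dots> = (\<integral>w. (\<integral>q. ind x (h (w, q)) \<partial>(B \<Otimes>\<^sub>M \<mu>)) \<partial>W)"
  proof -
    interpret pair_prob_space W "B \<Otimes>\<^sub>M \<mu>" using pW pQ by (simp add: pair_prob_space_def pair_sigma_finite_def prob_space_imp_sigma_finite)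
    have "integrable P (\<lambda>z. ind x (h z))"
      by (rule intb[where B=1]) (auto simp: pP ind_bnd intro!: ind_meas'[OF _ hm])
    then show ?thesis unfolding P_def by (rule integral_fst'[symmetric])
  qed
  also have "\<dots> = (\<integral>w. p * (\<integral>y. ind x (w + y) \<partial>\<mu>) + (1-p) * (\<integral>y. ind (x + w) y \<partial>\<mu>) \<partial>W)"
  proof (intro Bochner_Integration.integral_cong refl)
    fix w assume wW: "w \<in> space W"
    interpret pair_prob_space B \<mu> using pB mu(1) by (simp add: pair_prob_space_def pair_sigma_finite_def prob_space_imp_sigma_finite)
    have "integrable (B \<Otimes>\<^sub>M \<mu>) (\<lambda>q. ind x (h (w, q)))"
    proof (rule intb[where B=1])
      show "(\<lambda>q. ind x (h (w, q))) \<in> borel_measurable (B \<Otimes>\<^sub>M \<mu>)"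
        by (rule ind_meas'[OF _ measurable_Pair2[OF hm[unfolded P_def] wW]]) simp
    qed (auto simp: pQ ind_bnd)
    then have "(\<integral>q. ind x (h (w, q)) \<partial>(B \<Otimes>\<^sub>M \<mu>)) = (\<integral>b. (\<integral>y. ind x (h (w, b, y)) \<partial>\<mu>) \<partial>B)"
      by (subst integral_fst'[symmetric]) auto
    also have "\<dots> = p * (\<integral>y. ind x (w + y) \<partial>\<mu>) + (1-p) * (\<integral>y. ind (x + w) y \<partial>\<mu>)"
      using p unfolding B_def h_def by (simp add: ind_max[OF x]) (simp add: ind_def[abs_def] algebra_simps)
    finally show "(\<integral>q. ind x (h (w, q)) \<partial>(B \<Otimes>\<^sub>M \<mu>)) = p * (\<integral>y. ind x (w + y) \<partial>\<mu>) + (1-p) * (\<integral>y. ind (x + w) y \<partial>\<mu>)" .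
  qed
  also have "\<dots> = p * (\<integral>w. (\<integral>y. ind x (w + y) \<partial>\<mu>) \<partial>W) + (1-p) * (\<integral>w. (\<integral>y. ind (x + w) y \<partial>\<mu>) \<partial>W)"
  proof -
    have m1: "(\<lambda>(w, y). ind x (w + y)) \<in> borel_measurable (W \<Otimes>\<^sub>M \<mu>)"
      unfolding measurable_cong_sets[OF sets_bb[OF sW mu(2)] refl] by measurable
    have m2: "(\<lambda>(w, y). ind (x + w) y) \<in> borel_measurable (W \<Otimes>\<^sub>M \<mu>)"
      unfolding measurable_cong_sets[OF sets_bb[OF sW mu(2)] refl] by measurable
    have i1: "integrable W (\<lambda>w. \<integral>y. ind x (w + y) \<partial>\<mu>)"
      by (rule intb_param[OF pW mu(1) _, where C=1]) (use m1 in \<open>auto simp: ind_bnd\<close>)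
    have i2: "integrable W (\<lambda>w. \<integral>y. ind (x + w) y \<partial>\<mu>)"
      by (rule intb_param[OF pW mu(1) _, where C=1]) (use m2 in \<open>auto simp: ind_bnd\<close>)
    show ?thesis using i1 i2 by simp
  qed
  also have "(\<integral>w. (\<integral>y. ind x (w + y) \<partial>\<mu>) \<partial>W) = (\<integral>y. (\<integral>w. ind x (w + y) \<partial>W) \<partial>\<mu>)"
    by (rule fubini_swap[OF pW mu(1), where C=1])
       (auto simp: ind_bnd measurable_cong_sets[OF sets_bb[OF sW mu(2)] refl])
  also have "\<dots> = (\<integral>y. measure W {x - y<..} \<partial>\<mu>)"
    by (intro Bochner_Integration.integral_cong refl)
       (simp add: surv_int[OF pW sW] ind_def algebra_simps)
  also have "(\<integral>w. (\<integral>y. ind (x + w) y \<partial>\<mu>) \<partial>W) = (\<integral>w. measure \<mu> {x + w<..} \<partial>W)"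
    by (intro Bochner_Integration.integral_cong refl) (simp add: surv_int[OF mu])
  finally show "measure W {x<..} = p * (\<integral>y. measure W {x - y<..} \<partial>\<mu>) + (1-p) * (\<integral>w. measure \<mu> {x + w<..} \<partial>W)" .
qed


fun Rf :: "(nat \<Rightarrow> real) \<Rightarrow> nat \<Rightarrow> nat \<Rightarrow> real" where
  "Rf z m 0 = 0"
| "Rf z m (Suc n) = max 0 (z (Suc m) + Rf z (Suc m) n)"

lemma Rf_cong: "(\<And>j. m < j \<Longrightarrow> j \<le> m + n \<Longrightarrow> z j = z' j) \<Longrightarrow> Rf z m n = Rf z' m n"
proof (induction n arbitrary: m)
  case 0 then show ?case by simp
next
  case (Suc n)
  have "Rf z (Suc m) n = Rf z' (Suc m) n" by (rule Suc.IH) (use Suc.prems in auto)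
  moreover have "z (Suc m) = z' (Suc m)" by (rule Suc.prems) auto
  ultimately show ?case by simp
qed

lemma Rf_nonneg: "0 \<le> Rf z m n" by (cases n) auto

lemma Max_Rf: "Max ((\<lambda>i. \<Sum>j\<in>{m+1..m+i}. z j) ` {0..n}) = Rf z m n"
proof (induction n arbitrary: m)
  case 0 then show ?case by simp
next
  case (Suc n)
  have set: "{0..Suc n} = insert 0 (Suc ` {0..n})" by (auto simp: image_iff)
  have sm: "(\<Sum>j\<in>{m+1..m+Suc i}. z j) = (\<Sum>j\<in>{Suc m+1..Suc m+i}. z j) + z (Suc m)" for i
    by (subst sum.atLeast_Suc_atMost) auto
  have "(\<lambda>i. \<Sum>j\<in>{m+1..m+i}. z j) ` {0..Suc n} = insert 0 ((\<lambda>i. (\<Sum>j\<in>{Suc m+1..Suc m+i}. z j) + z (Suc m)) ` {0..n})"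
  proof -
    have "(\<lambda>i. \<Sum>j\<in>{m+1..m+i}. z j) ` {0..Suc n} = insert ((\<lambda>i. \<Sum>j\<in>{m+1..m+i}. z j) 0) ((\<lambda>i. \<Sum>j\<in>{m+1..m+Suc i}. z j) ` {0..n})"
      by (simp only: set image_insert image_image)
    also have "(\<lambda>i. \<Sum>j\<in>{m+1..m+i}. z j) 0 = 0" by simp
    also have "(\<lambda>i. \<Sum>j\<in>{m+1..m+Suc i}. z j) ` {0..n} = (\<lambda>i. (\<Sum>j\<in>{Suc m+1..Suc m+i}. z j) + z (Suc m)) ` {0..n}"
      by (rule image_cong[OF refl]) (rule sm)
    finally show ?thesis .
  qed
  then have "Max ((\<lambda>i. \<Sum>j\<in>{m+1..m+i}. z j) ` {0..Suc n}) = max 0 (Max ((\<lambda>i. \<Sum>j\<in>{Suc m+1..Suc m+i}. z j) ` {0..n}) + z (Suc m))"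
    by (simp add: Max_add_commute)
  also have "\<dots> = Rf z m (Suc n)" using Suc.IH[of "Suc m"] by simp
  finally show ?case .
qed

lemma runmax_Rf: "runmax X n \<omega> = Rf (\<lambda>j. X j \<omega>) 0 n"
  unfolding runmax_def psum_def using Max_Rf[where m=0 and z="\<lambda>j. X j \<omega>" and n=n] by simp

lemma Rf_meas:
  "Some ` {m<..m+n} \<subseteq> L \<Longrightarrow> (\<lambda>v. Rf (\<lambda>j. v (Some j)) m n) \<in> borel_measurable (PiM L (\<lambda>_. borel))"
proof (induction n arbitrary: m)
  case 0 then show ?case by simp
next
  case (Suc n)
  have "(\<lambda>v. Rf (\<lambda>j. v (Some j)) (Suc m) n) \<in> borel_measurable (PiM L (\<lambda>_. borel))"
    by (rule Suc.IH) (use Suc.prems in auto)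
  moreover have "(\<lambda>v. v (Some (Suc m))) \<in> borel_measurable (PiM L (\<lambda>_. borel))"
    by (rule measurable_component_singleton) (use Suc.prems in auto)
  ultimately show ?case by (simp only: Rf.simps) (intro borel_measurable_max borel_measurable_add; simp)
qed



lemma surv_meas:
  fixes \<nu> :: "real measure"
  assumes "prob_space \<nu>" "sets \<nu> = sets borel"
  shows "(\<lambda>x. measure \<nu> {x<..}) \<in> borel_measurable borel"
proof -
  interpret prob_space \<nu> by fact
  have "mono (\<lambda>x. - measure \<nu> {x<..})"
    by (rule monoI) (auto intro!: finite_measure_mono simp: assms(2))
  then have "(\<lambda>x. - measure \<nu> {x<..}) \<in> borel_measurable borel" by (rule borel_measurable_mono)
  then have "(\<lambda>x. - (- measure \<nu> {x<..})) \<in> borel_measurable borel" by measurable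
  then show ?thesis by simp
qed

lemma surv_bnd: "prob_space \<nu> \<Longrightarrow> 0 \<le> measure \<nu> A \<and> measure \<nu> A \<le> 1"
  by (simp add: prob_space.prob_le_1)

lemma ind_max': "0 \<le> x \<Longrightarrow> ind x (max 0 t) = ind x t" by (auto simp: ind_def)

context
  fixes M :: "'a measure" and \<mu> :: "real measure" and X :: "nat \<Rightarrow> 'a \<Rightarrow> real" and N :: "'a \<Rightarrow> nat"
  assumes M: "prob_space M"
    and mu: "prob_space \<mu>" "sets \<mu> = sets borel"
    and Xrv: "\<And>i. X i \<in> borel_measurable M"
    and Xdist: "\<And>i. distr M borel (X i) = \<mu>"
    and Nrv: "N \<in> measurable M (count_space UNIV)"
    and indep: "prob_space.indep_vars M (\<lambda>_. borel)
                  (\<lambda>j. case j of None \<Rightarrow> (\<lambda>\<omega>. real (N \<omega>)) | Some i \<Rightarrow> X i) UNIV"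
begin

lemma R_meas: "(\<lambda>\<omega>. Rf (\<lambda>j. X j \<omega>) m n) \<in> borel_measurable M"
proof (induction n arbitrary: m)
  case 0 then show ?case by simp
next
  case (Suc n)
  show ?case by (simp only: Rf.simps) (intro borel_measurable_max borel_measurable_add Suc.IH Xrv; simp)
qed

lemma indep_XR: "prob_space.indep_var M borel (X (Suc m)) borel (\<lambda>\<omega>. Rf (\<lambda>j. X j \<omega>) (Suc m) n)"
proof -
  interpret prob_space M by (rule M)
  define Y where "Y = (\<lambda>j. case j of None \<Rightarrow> (\<lambda>\<omega>. real (N \<omega>)) | Some i \<Rightarrow> X i)"
  define A where "A = {Some (Suc m)}"
  define B where "B = Some ` {Suc m<..Suc m+n}"
  have "indep_var (PiM A (\<lambda>_. borel)) (\<lambda>\<omega>. restrict (\<lambda>i. Y i \<omega>) A) (PiM B (\<lambda>_. borel)) (\<lambda>\<omega>. restrict (\<lambda>i. Y i \<omega>) B)"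
    by (rule indep_var_restrict[OF indep[folded Y_def]]) (auto simp: A_def B_def)
  from indep_var_compose[OF this measurable_component_singleton[where i="Some (Suc m)"] Rf_meas[where m="Suc m" and n=n and L=B]]
  have "indep_var borel ((\<lambda>v. v (Some (Suc m))) \<circ> (\<lambda>\<omega>. restrict (\<lambda>i. Y i \<omega>) A)) borel
           ((\<lambda>v. Rf (\<lambda>j. v (Some j)) (Suc m) n) \<circ> (\<lambda>\<omega>. restrict (\<lambda>i. Y i \<omega>) B))"
    by (auto simp: A_def B_def)
  also have "(\<lambda>v. v (Some (Suc m))) \<circ> (\<lambda>\<omega>. restrict (\<lambda>i. Y i \<omega>) A) = X (Suc m)"
    by (auto simp: A_def Y_def fun_eq_iff)
  also have "(\<lambda>v. Rf (\<lambda>j. v (Some j)) (Suc m) n) \<circ> (\<lambda>\<omega>. restrict (\<lambda>i. Y i \<omega>) B) = (\<lambda>\<omega>. Rf (\<lambda>j. X j \<omega>) (Suc m) n)"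
    by (auto simp: fun_eq_iff B_def Y_def intro!: Rf_cong)
  finally show ?thesis .
qed

lemma indep_NR: "prob_space.indep_var M borel (\<lambda>\<omega>. real (N \<omega>)) borel (\<lambda>\<omega>. Rf (\<lambda>j. X j \<omega>) 0 n)"
proof -
  interpret prob_space M by (rule M)
  define Y where "Y = (\<lambda>j. case j of None \<Rightarrow> (\<lambda>\<omega>. real (N \<omega>)) | Some i \<Rightarrow> X i)"
  define A where "A = {None :: nat option}"
  define B where "B = Some ` {0<..0+n}"
  have "indep_var (PiM A (\<lambda>_. borel)) (\<lambda>\<omega>. restrict (\<lambda>i. Y i \<omega>) A) (PiM B (\<lambda>_. borel)) (\<lambda>\<omega>. restrict (\<lambda>i. Y i \<omega>) B)"
    by (rule indep_var_restrict[OF indep[folded Y_def]]) (auto simp: A_def B_def)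
  from indep_var_compose[OF this measurable_component_singleton[where i="None"] Rf_meas[where m="0" and n=n and L=B]]
  have "indep_var borel ((\<lambda>v. v None) \<circ> (\<lambda>\<omega>. restrict (\<lambda>i. Y i \<omega>) A)) borel
           ((\<lambda>v. Rf (\<lambda>j. v (Some j)) 0 n) \<circ> (\<lambda>\<omega>. restrict (\<lambda>i. Y i \<omega>) B))"
    by (auto simp: A_def B_def)
  also have "(\<lambda>v. v None) \<circ> (\<lambda>\<omega>. restrict (\<lambda>i. Y i \<omega>) A) = (\<lambda>\<omega>. real (N \<omega>))"
    by (auto simp: A_def Y_def fun_eq_iff)
  also have "(\<lambda>v. Rf (\<lambda>j. v (Some j)) 0 n) \<circ> (\<lambda>\<omega>. restrict (\<lambda>i. Y i \<omega>) B) = (\<lambda>\<omega>. Rf (\<lambda>j. X j \<omega>) 0 n)"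
    by (auto simp: fun_eq_iff B_def Y_def intro!: Rf_cong)
  finally show ?thesis .
qed

lemma law_step: "distr M borel (\<lambda>\<omega>. Rf (\<lambda>j. X j \<omega>) m (Suc n)) =
   distr (\<mu> \<Otimes>\<^sub>M distr M borel (\<lambda>\<omega>. Rf (\<lambda>j. X j \<omega>) (Suc m) n)) borel (\<lambda>(a, b). max 0 (a + b))"
proof -
  interpret prob_space M by (rule M)
  have I: "indep_var borel (X (Suc m)) borel (\<lambda>\<omega>. Rf (\<lambda>j. X j \<omega>) (Suc m) n)" by (rule indep_XR)
  have eq: "distr M (borel \<Otimes>\<^sub>M borel) (\<lambda>\<omega>. (X (Suc m) \<omega>, Rf (\<lambda>j. X j \<omega>) (Suc m) n)) =
      \<mu> \<Otimes>\<^sub>M distr M borel (\<lambda>\<omega>. Rf (\<lambda>j. X j \<omega>) (Suc m) n)"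
    using I[unfolded indep_var_distribution_eq] Xdist by simp
  have pm: "(\<lambda>\<omega>. (X (Suc m) \<omega>, Rf (\<lambda>j. X j \<omega>) (Suc m) n)) \<in> measurable M (borel \<Otimes>\<^sub>M borel)"
    using Xrv R_meas by measurable
  have fm: "(\<lambda>(a::real, b::real). max 0 (a + b)) \<in> measurable (borel \<Otimes>\<^sub>M borel) borel" by measurable
  have "distr M borel (\<lambda>\<omega>. Rf (\<lambda>j. X j \<omega>) m (Suc n)) =
     distr M borel ((\<lambda>(a, b). max 0 (a + b)) \<circ> (\<lambda>\<omega>. (X (Suc m) \<omega>, Rf (\<lambda>j. X j \<omega>) (Suc m) n)))"
    by (simp add: o_def)
  also have "\<dots> = distr (distr M (borel \<Otimes>\<^sub>M borel) (\<lambda>\<omega>. (X (Suc m) \<omega>, Rf (\<lambda>j. X j \<omega>) (Suc m) n))) borel (\<lambda>(a, b). max 0 (a + b))"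
    by (rule distr_distr[OF fm pm, symmetric])
  finally show ?thesis unfolding eq .
qed

lemma law_shift: "distr M borel (\<lambda>\<omega>. Rf (\<lambda>j. X j \<omega>) m n) = distr M borel (\<lambda>\<omega>. Rf (\<lambda>j. X j \<omega>) 0 n)"
proof (induction n arbitrary: m)
  case 0 then show ?case by simp
next
  case (Suc n)
  show ?case unfolding law_step Suc.IH[of "Suc m"] Suc.IH[of "Suc 0"] ..
qed

lemma La_prob: "prob_space (distr M borel (\<lambda>\<omega>. Rf (\<lambda>j. X j \<omega>) 0 n))"
  by (rule prob_space.prob_space_distr[OF M R_meas])

lemma a_rec:
  assumes x: "0 \<le> x"
  shows "measure (distr M borel (\<lambda>\<omega>. Rf (\<lambda>j. X j \<omega>) 0 (Suc n))) {x<..} =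
    (\<integral>y. measure (distr M borel (\<lambda>\<omega>. Rf (\<lambda>j. X j \<omega>) 0 n)) {x - y<..} \<partial>\<mu>)"
proof -
  define L where "L = distr M borel (\<lambda>\<omega>. Rf (\<lambda>j. X j \<omega>) 0 n)"
  have pL: "prob_space L" unfolding L_def by (rule La_prob)
  have sL: "sets L = sets borel" unfolding L_def by simp
  interpret pair_prob_space \<mu> L using mu(1) pL by (simp add: pair_prob_space_def pair_sigma_finite_def prob_space_imp_sigma_finite)
  have eq: "distr M borel (\<lambda>\<omega>. Rf (\<lambda>j. X j \<omega>) 0 (Suc n)) = distr (\<mu> \<Otimes>\<^sub>M L) borel (\<lambda>(a, b). max 0 (a + b))"
    unfolding law_step law_shift[of "Suc 0" n] L_def ..
  have fm: "(\<lambda>(a::real, b::real). max 0 (a + b)) \<in> borel_measurable (\<mu> \<Otimes>\<^sub>M L)"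
    unfolding measurable_cong_sets[OF sets_bb[OF mu(2) sL] refl] by measurable
  have "measure (distr M borel (\<lambda>\<omega>. Rf (\<lambda>j. X j \<omega>) 0 (Suc n))) {x<..} =
      (\<integral>t. ind x t \<partial>distr (\<mu> \<Otimes>\<^sub>M L) borel (\<lambda>(a, b). max 0 (a + b)))"
    unfolding eq[symmetric] by (rule surv_int[OF La_prob]) simp
  also have "\<dots> = (\<integral>z. ind x (case z of (a, b) \<Rightarrow> max 0 (a + b)) \<partial>(\<mu> \<Otimes>\<^sub>M L))"
    using fm by (subst integral_distr) auto
  also have "\<dots> = (\<integral>a. (\<integral>b. ind x (max 0 (a + b)) \<partial>L) \<partial>\<mu>)"
  proof -
    have "integrable (\<mu> \<Otimes>\<^sub>M L) (\<lambda>z. ind x (case z of (a, b) \<Rightarrow> max 0 (a + b)))"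
      by (rule intb[where B=1]) (auto simp: ind_bnd prob_space_pair[OF mu(1) pL] intro!: ind_meas'[OF _ fm])
    from integral_fst'[OF this] show ?thesis by simp
  qed
  also have "\<dots> = (\<integral>a. measure L {x - a<..} \<partial>\<mu>)"
    by (intro Bochner_Integration.integral_cong refl)
       (simp add: surv_int[OF pL sL] ind_max'[OF x], simp add: ind_def algebra_simps)
  finally show ?thesis unfolding L_def .
qed

lemma a_zero: "measure (distr M borel (\<lambda>\<omega>. Rf (\<lambda>j. X j \<omega>) 0 0)) {x<..} = (if x < 0 then 1 else 0)"
  using M by (simp add: measure_distr prob_space.prob_space)

lemma sV_series:
  assumes Ndist: "\<And>k. measure M {\<omega> \<in> space M. N \<omega> = k} = (1 - p) * p ^ k"
  shows "(\<lambda>k. (1 - p) * p ^ k * measure (distr M borel (\<lambda>\<omega>. Rf (\<lambda>j. X j \<omega>) 0 (Suc k))) {x<..})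
     sums measure M {\<omega> \<in> space M. runmax X (N \<omega> + 1) \<omega> > x}"
proof -
  interpret prob_space M by (rule M)
  define E where "E k = {\<omega>\<in>space M. N \<omega> = k \<and> x < Rf (\<lambda>j. X j \<omega>) 0 (Suc k)}" for k
  have Em: "E k \<in> sets M" for k
  proof -
    have "E k = (N -` {k} \<inter> space M) \<inter> ((\<lambda>\<omega>. Rf (\<lambda>j. X j \<omega>) 0 (Suc k)) -` {x<..} \<inter> space M)"
      by (auto simp: E_def)
    also have "\<dots> \<in> sets M"
      by (intro sets.Int measurable_sets[OF Nrv] measurable_sets[OF R_meas]) auto
    finally show ?thesis .
  qed
  have disj: "disjoint_family E" by (auto simp: disjoint_family_on_def E_def)
  have U: "(\<Union>k. E k) = {\<omega> \<in> space M. runmax X (N \<omega> + 1) \<omega> > x}"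
    by (auto simp: E_def runmax_Rf)
  have mE: "measure M (E k) = (1 - p) * p ^ k * measure (distr M borel (\<lambda>\<omega>. Rf (\<lambda>j. X j \<omega>) 0 (Suc k))) {x<..}" for k
  proof -
    have "measure M ((\<lambda>\<omega>. (real (N \<omega>), Rf (\<lambda>j. X j \<omega>) 0 (Suc k))) -` ({real k} \<times> {x<..}) \<inter> space M) =
      measure M ((\<lambda>\<omega>. real (N \<omega>)) -` {real k} \<inter> space M) * measure M ((\<lambda>\<omega>. Rf (\<lambda>j. X j \<omega>) 0 (Suc k)) -` {x<..} \<inter> space M)"
      by (rule indep_varD[OF indep_NR]) auto
    moreover have "(\<lambda>\<omega>. (real (N \<omega>), Rf (\<lambda>j. X j \<omega>) 0 (Suc k))) -` ({real k} \<times> {x<..}) \<inter> space M = E k"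
      by (auto simp: E_def)
    moreover have "(\<lambda>\<omega>. real (N \<omega>)) -` {real k} \<inter> space M = {\<omega> \<in> space M. N \<omega> = k}" by auto
    moreover have "measure M ((\<lambda>\<omega>. Rf (\<lambda>j. X j \<omega>) 0 (Suc k)) -` {x<..} \<inter> space M) = measure (distr M borel (\<lambda>\<omega>. Rf (\<lambda>j. X j \<omega>) 0 (Suc k))) {x<..}"
      by (subst measure_distr[OF R_meas]) auto
    ultimately show ?thesis using Ndist by simp
  qed
  show ?thesis using finite_measure_UNION[OF _ disj] Em unfolding U mE by auto
qed

lemma sV_fix:
  assumes Ndist: "\<And>k. measure M {\<omega> \<in> space M. N \<omega> = k} = (1 - p) * p ^ k"
    and p: "0 \<le> p" "p < 1" and x: "0 \<le> x"
  defines "sV \<equiv> \<lambda>z. measure M {\<omega> \<in> space M. runmax X (N \<omega> + 1) \<omega> > z}"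
  shows "sV x = p * (\<integral>y. sV (x - y) \<partial>\<mu>) + (1 - p) * measure \<mu> {x<..}"
proof -
  interpret mu: prob_space \<mu> by (rule mu(1))
  define a where "a k z = measure (distr M borel (\<lambda>\<omega>. Rf (\<lambda>j. X j \<omega>) 0 k)) {z<..}" for k z
  define c where "c z k = (1 - p) * p ^ k * a (Suc k) z" for z k
  have H1: "c z sums sV z" for z unfolding c_def a_def sV_def by (rule sV_series[OF Ndist])
  have H2: "(\<lambda>k. c x (Suc k)) sums (sV x - c x 0)"
    using H1[of x] by (subst sums_Suc_iff) simp
  have H3: "c x 0 = (1 - p) * measure \<mu> {x<..}"
  proof -
    have "a 1 x = (\<integral>y. a 0 (x - y) \<partial>\<mu>)" unfolding a_def using a_rec[OF x, of 0] by simp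
    also have "\<dots> = (\<integral>y. ind x y \<partial>\<mu>)" unfolding a_def a_zero
      by (intro Bochner_Integration.integral_cong refl) (auto simp: ind_def)
    also have "\<dots> = measure \<mu> {x<..}" by (rule surv_int[OF mu, symmetric])
    finally show ?thesis unfolding c_def by simp
  qed
  have am: "(\<lambda>y. a k (x - y)) \<in> borel_measurable \<mu>" for k
  proof -
    have "(\<lambda>z. a k z) \<in> borel_measurable borel" unfolding a_def by (rule surv_meas[OF La_prob]) simp
    then have "(\<lambda>y. a k (x - y)) \<in> borel_measurable borel" by measurable
    then show ?thesis using measurable_cong_sets[OF mu(2)] by blast
  qed
  have abnd: "0 \<le> a k z \<and> a k z \<le> 1" for k z unfolding a_def by (rule surv_bnd[OF La_prob])
  have pk: "0 \<le> (1 - p) * p ^ k" "(1 - p) * p ^ k \<le> 1" for k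
  proof -
    show "0 \<le> (1 - p) * p ^ k" using p by simp
    have "p ^ k \<le> 1" using p by (simp add: power_le_one)
    then show "(1 - p) * p ^ k \<le> 1" using p by (smt (verit) mult_left_le_one_le zero_le_power)
  qed
  have cb: "\<bar>c z k\<bar> \<le> (1 - p) * p ^ k" for z k
  proof -
    have "\<bar>c z k\<bar> = (1 - p) * p ^ k * a (Suc k) z"
      unfolding c_def using abnd[of "Suc k" z] pk[of k] by (intro abs_of_nonneg) simp
    also have "\<dots> \<le> (1 - p) * p ^ k" using abnd[of "Suc k" z] pk[of k] by (intro mult_left_le) auto
    finally show ?thesis .
  qed
  have sg: "summable (\<lambda>k. (1 - p) * p ^ k)" using p by (intro summable_mult summable_geometric) auto
  have ci: "integrable \<mu> (\<lambda>y. c (x - y) k)" for k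
  proof (rule intb[OF mu(1), where B=1])
    show "(\<lambda>y. c (x - y) k) \<in> borel_measurable \<mu>" unfolding c_def using am by simp
    show "\<bar>c (x - y) k\<bar> \<le> 1" for y using cb[of "x - y" k] pk[of k] by linarith
  qed
  have H5: "(\<lambda>k. \<integral>y. c (x - y) k \<partial>\<mu>) sums (\<integral>y. (\<Sum>k. c (x - y) k) \<partial>\<mu>)"
  proof (rule sums_integral[OF ci])
    show "AE y in \<mu>. summable (\<lambda>k. norm (c (x - y) k))"
      using cb by (intro AE_I2 summable_comparison_test'[OF sg]) auto
    show "summable (\<lambda>k. \<integral>y. norm (c (x - y) k) \<partial>\<mu>)"
    proof (rule summable_comparison_test'[OF sg])
      fix k
      have "norm (\<integral>y. norm (c (x - y) k) \<partial>\<mu>) = (\<integral>y. \<bar>c (x - y) k\<bar> \<partial>\<mu>)" by simp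
      also have "\<dots> \<le> (\<integral>y. (1 - p) * p ^ k \<partial>\<mu>)"
        using ci cb by (intro integral_mono) auto
      also have "\<dots> = (1 - p) * p ^ k" by (simp add: mu.prob_space)
      finally show "norm (\<integral>y. norm (c (x - y) k) \<partial>\<mu>) \<le> (1 - p) * p ^ k" .
    qed
  qed
  have "(\<Sum>k. c (x - y) k) = sV (x - y)" for y using H1 by (simp add: sums_iff)
  then have H5': "(\<lambda>k. p * (\<integral>y. c (x - y) k \<partial>\<mu>)) sums (p * (\<integral>y. sV (x - y) \<partial>\<mu>))"
    using sums_mult[OF H5, of p] by simp
  have H4: "c x (Suc k) = p * (\<integral>y. c (x - y) k \<partial>\<mu>)" for k
  proof -
    have "c x (Suc k) = (1 - p) * p ^ Suc k * (\<integral>y. a (Suc k) (x - y) \<partial>\<mu>)"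
      unfolding c_def a_def using a_rec[OF x, of "Suc k"] by simp
    also have "\<dots> = p * (\<integral>y. c (x - y) k \<partial>\<mu>)" unfolding c_def by simp
    finally show ?thesis .
  qed
  have "sV x - c x 0 = p * (\<integral>y. sV (x - y) \<partial>\<mu>)"
    using H2 H5' unfolding H4 by (rule sums_unique2)
  then show ?thesis using H3 by simp
qed

end


lemma surv_neg:
  fixes \<nu> :: "real measure"
  assumes "prob_space \<nu>" "sets \<nu> = sets borel" "AE t in \<nu>. 0 \<le> t" "x < 0"
  shows "measure \<nu> {x<..} = 1"
proof -
  interpret prob_space \<nu> by fact
  have "measure \<nu> {x<..} = (\<integral>t. ind x t \<partial>\<nu>)" by (rule surv_int[OF assms(1,2)])
  also have "\<dots> = (\<integral>t. 1 \<partial>\<nu>)"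
  proof (rule integral_cong_AE)
    have "(\<lambda>t. ind x t) \<in> borel_measurable borel" by (rule ind_meas') auto
    then show "(\<lambda>t. ind x t) \<in> borel_measurable \<nu>" using measurable_cong_sets[OF assms(2) refl] by blast
    show "AE t in \<nu>. ind x t = 1" using assms(3,4) by (auto simp: ind_def elim!: eventually_mono)
  qed simp
  finally show ?thesis by (simp add: prob_space)
qed

lemma comp_meas:
  fixes f :: "real \<Rightarrow> real"
  assumes "f \<in> borel_measurable borel" "sets A = sets borel"
  shows "(\<lambda>w. f (x + w)) \<in> borel_measurable A" "(\<lambda>w. f (x - w)) \<in> borel_measurable A"
proof -
  have "(\<lambda>w. f (x + w)) \<in> borel_measurable borel" "(\<lambda>w. f (x - w)) \<in> borel_measurable borel"
    using assms(1) by measurable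
  then show "(\<lambda>w. f (x + w)) \<in> borel_measurable A" "(\<lambda>w. f (x - w)) \<in> borel_measurable A"
    using measurable_cong_sets[OF assms(2) refl] by blast+
qed

theorem lemma3p1:
  fixes M :: "'a measure" and \<mu> W :: "real measure" and p :: real
    and X :: "nat \<Rightarrow> 'a \<Rightarrow> real" and N :: "'a \<Rightarrow> nat" and W' :: "'a \<Rightarrow> real"
  assumes M: "prob_space M"
    and mu: "prob_space \<mu>" "sets \<mu> = sets borel"
    and neg: "measure \<mu> {..<0} > 0"
    and p: "0 \<le> p" "p < 1"
    and Xrv: "\<And>i. X i \<in> borel_measurable M"
    and Xdist: "\<And>i. distr M borel (X i) = \<mu>"
    and Nrv: "N \<in> measurable M (count_space UNIV)"
    and Ndist: "\<And>k. measure M {\<omega> \<in> space M. N \<omega> = k} = (1 - p) * p ^ k"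
    and indep: "prob_space.indep_vars M (\<lambda>_. borel)
                  (\<lambda>j. case j of None \<Rightarrow> (\<lambda>\<omega>. real (N \<omega>)) | Some i \<Rightarrow> X i) UNIV"
    and W: "stationary_dist \<mu> p W"
    and W'dist: "distr M borel W' = W"
    and W'indep: "prob_space.indep_var M borel (\<lambda>\<omega>. runmax X (N \<omega> + 1) \<omega>) borel W'"
  shows "(\<forall>x. measure W {x<..} \<le> measure M {\<omega> \<in> space M. runmax X (N \<omega> + 1) \<omega> > x}) \<and>
         (\<forall>x. measure M {\<omega> \<in> space M. runmax X (N \<omega> + 1) \<omega> - W' \<omega> > x} \<le> measure W {x<..})"
proof -
  interpret prob_space M by (rule M)
  interpret mu: prob_space \<mu> by (rule mu(1))
  define T where "T \<omega> = runmax X (N \<omega> + 1) \<omega>" for \<omega>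
  define sV where "sV z = measure M {\<omega> \<in> space M. runmax X (N \<omega> + 1) \<omega> > z}" for z
  define sW where "sW z = measure W {z<..}" for z
  define u where "u z = measure M {\<omega> \<in> space M. runmax X (N \<omega> + 1) \<omega> - W' \<omega> > z}" for z
  have p1: "p \<le> 1" using p by simp
  note st = stat_facts[OF mu p(1) p1 W]
  have pW: "prob_space W" and sWb: "sets W = sets borel" and AEW: "AE w in W. 0 \<le> w" using st by auto
  have stW: "x \<ge> 0 \<Longrightarrow> sW x = p * (\<integral>y. sW (x - y) \<partial>\<mu>) + (1-p) * (\<integral>w. measure \<mu> {x + w<..} \<partial>W)" for x
    unfolding sW_def by (rule st(4))
  have Tm: "T \<in> borel_measurable M" unfolding T_def by (rule indep_var_rv1[OF W'indep])
  have W'm: "W' \<in> borel_measurable M" by (rule indep_var_rv2[OF W'indep])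
  define Vd where "Vd = distr M borel T"
  have pV: "prob_space Vd" unfolding Vd_def by (rule prob_space_distr[OF Tm])
  have sVd: "sets Vd = sets borel" unfolding Vd_def by simp
  have sV_eq: "sV z = measure Vd {z<..}" for z
    unfolding sV_def Vd_def T_def using Tm[unfolded T_def] by (subst measure_distr) (auto simp: vimage_def Int_def conj_commute)
  have sVm: "sV \<in> borel_measurable borel" unfolding sV_eq[abs_def] by (rule surv_meas[OF pV sVd])
  have sVb: "0 \<le> sV z \<and> sV z \<le> 1" for z unfolding sV_eq by (rule surv_bnd[OF pV])
  have T0: "0 \<le> T \<omega>" for \<omega> unfolding T_def runmax_Rf by (rule Rf_nonneg)
  have sVneg: "z < 0 \<Longrightarrow> sV z = 1" for z
  proof -
    assume z: "z < 0"
    have "{\<omega> \<in> space M. runmax X (N \<omega> + 1) \<omega> > z} = space M"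
      using T0[unfolded T_def] z by (auto intro: less_le_trans)
    then show "sV z = 1" unfolding sV_def by (simp add: prob_space)
  qed
  have sVfix: "0 \<le> z \<Longrightarrow> sV z = p * (\<integral>y. sV (z - y) \<partial>\<mu>) + (1 - p) * measure \<mu> {z<..}" for z
    unfolding sV_def by (rule sV_fix[OF M mu Xrv Xdist Nrv indep Ndist p])
  have sWm: "sW \<in> borel_measurable borel" unfolding sW_def by (rule surv_meas[OF pW sWb])
  have sWb': "0 \<le> sW z \<and> sW z \<le> 1" for z unfolding sW_def by (rule surv_bnd[OF pW])
  have sWneg: "z < 0 \<Longrightarrow> sW z = 1" for z unfolding sW_def by (rule surv_neg[OF pW sWb AEW])
  have smm: "(\<lambda>z. measure \<mu> {z<..}) \<in> borel_measurable borel" by (rule surv_meas[OF mu])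
  have cWi: "integrable W (\<lambda>w. measure \<mu> {x + w<..})" for x
    by (rule intb[OF pW, where B=1]) (auto simp: comp_meas[OF smm sWb] surv_bnd[OF mu(1)])
  have cW: "(\<integral>w. measure \<mu> {x + w<..} \<partial>W) \<le> measure \<mu> {x<..}" if x: "0 \<le> x" for x
  proof -
    have ci: "integrable W (\<lambda>w. measure \<mu> {x<..})"
      by (rule intb[OF pW, where B=1]) (auto simp: surv_bnd[OF mu(1)])
    have "(\<integral>w. measure \<mu> {x + w<..} \<partial>W) \<le> (\<integral>w. measure \<mu> {x<..} \<partial>W)"
      using AEW ci by (intro integral_mono_AE cWi) (auto elim!: eventually_mono intro!: mu.finite_measure_mono simp: mu(2))
    also have "\<dots> = measure \<mu> {x<..}" by (simp add: prob_space.prob_space[OF pW])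
    finally show ?thesis .
  qed
  have claim1: "sW x \<le> sV x" for x
  proof (rule contraction[OF mu p _ sWm _ sVm])
    show "0 \<le> sW x \<and> sW x \<le> 1" for x by (rule sWb')
    show "0 \<le> sV x \<and> sV x \<le> 1" for x by (rule sVb)
    fix x
    show "sW x - sV x \<le> max 0 (p * ((\<integral>y. sW (x - y) \<partial>\<mu>) - (\<integral>y. sV (x - y) \<partial>\<mu>)))"
    proof (cases "x < 0")
      case True
      then have "sW x - sV x \<le> 0" using sVneg[of x] sWb'[of x] by simp
      then show ?thesis by (rule order_trans) simp
    next
      case False
      then have x: "0 \<le> x" by simp
      have "sW x - sV x \<le> p * ((\<integral>y. sW (x - y) \<partial>\<mu>) - (\<integral>y. sV (x - y) \<partial>\<mu>))"
      proof -
        have "(1 - p) * (\<integral>w. measure \<mu> {x + w<..} \<partial>W) \<le> (1 - p) * measure \<mu> {x<..}"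
          using cW[OF x] p by (intro mult_left_mono) auto
        moreover have "p * ((\<integral>y. sW (x - y) \<partial>\<mu>) - (\<integral>y. sV (x - y) \<partial>\<mu>)) = p * (\<integral>y. sW (x - y) \<partial>\<mu>) - p * (\<integral>y. sV (x - y) \<partial>\<mu>)"
          by (rule right_diff_distrib)
        ultimately show ?thesis using stW[OF x] sVfix[OF x] by linarith
      qed
      then show ?thesis by simp
    qed
  qed
  define Ud where "Ud = distr M borel (\<lambda>\<omega>. T \<omega> - W' \<omega>)"
  have TWm: "(\<lambda>\<omega>. T \<omega> - W' \<omega>) \<in> borel_measurable M" using Tm W'm by measurable
  have pU: "prob_space Ud" unfolding Ud_def by (rule prob_space_distr[OF TWm])
  have sUd: "sets Ud = sets borel" unfolding Ud_def by simp
  have u_eq: "u z = measure Ud {z<..}" for z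
    unfolding u_def Ud_def T_def using TWm[unfolded T_def] by (subst measure_distr) (auto simp: vimage_def Int_def conj_commute)
  have um: "u \<in> borel_measurable borel" unfolding u_eq[abs_def] by (rule surv_meas[OF pU sUd])
  have ub: "0 \<le> u z \<and> u z \<le> 1" for z unfolding u_eq by (rule surv_bnd[OF pU])
  have pairm: "(\<lambda>\<omega>. (T \<omega>, W' \<omega>)) \<in> measurable M (borel \<Otimes>\<^sub>M borel)" using Tm W'm by measurable
  have eqd: "distr M (borel \<Otimes>\<^sub>M borel) (\<lambda>\<omega>. (T \<omega>, W' \<omega>)) = Vd \<Otimes>\<^sub>M W"
    using W'indep[unfolded indep_var_distribution_eq] W'dist unfolding Vd_def T_def by simp
  have u_int: "u x = (\<integral>w. sV (x + w) \<partial>W)" for x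
  proof -
    interpret pair_prob_space Vd W using pV pW by (simp add: pair_prob_space_def pair_sigma_finite_def prob_space_imp_sigma_finite)
    have dm: "(\<lambda>(t, w). ind x (t - w)) \<in> borel_measurable (borel \<Otimes>\<^sub>M borel)" by measurable
    have "u x = (\<integral>t. ind x t \<partial>Ud)" unfolding u_eq by (rule surv_int[OF pU sUd])
    also have "\<dots> = (\<integral>\<omega>. ind x (T \<omega> - W' \<omega>) \<partial>M)" unfolding Ud_def using TWm by (subst integral_distr) auto
    also have "\<dots> = (\<integral>z. (case z of (t, w) \<Rightarrow> ind x (t - w)) \<partial>distr M (borel \<Otimes>\<^sub>M borel) (\<lambda>\<omega>. (T \<omega>, W' \<omega>)))"
      using pairm dm by (subst integral_distr) auto
    also have "\<dots> = (\<integral>z. (case z of (t, w) \<Rightarrow> ind x (t - w)) \<partial>(Vd \<Otimes>\<^sub>M W))" unfolding eqd ..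
    also have "\<dots> = (\<integral>w. (\<integral>t. ind x (t - w) \<partial>Vd) \<partial>W)"
    proof -
      have "integrable (Vd \<Otimes>\<^sub>M W) (\<lambda>(t, w). ind x (t - w))"
        by (rule intb[where B=1]) (auto simp: prob_space_pair[OF pV pW] ind_bnd measurable_cong_sets[OF sets_bb[OF sVd sWb] refl] dm)
      from integral_snd[OF this] show ?thesis by simp
    qed
    also have "\<dots> = (\<integral>w. sV (x + w) \<partial>W)"
      by (intro Bochner_Integration.integral_cong refl) (simp add: sV_eq surv_int[OF pV sVd] ind_def algebra_simps)
    finally show ?thesis .
  qed
  have claim2: "u x \<le> sW x" for x
  proof (rule contraction[OF mu p _ um _ sWm])
    show "0 \<le> u x \<and> u x \<le> 1" for x by (rule ub)
    show "0 \<le> sW x \<and> sW x \<le> 1" for x by (rule sWb')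
    fix x
    show "u x - sW x \<le> max 0 (p * ((\<integral>y. u (x - y) \<partial>\<mu>) - (\<integral>y. sW (x - y) \<partial>\<mu>)))"
    proof (cases "x < 0")
      case True
      then have "u x - sW x \<le> 0" using sWneg[of x] ub[of x] by simp
      then show ?thesis by (rule order_trans) simp
    next
      case False
      then have x: "0 \<le> x" by simp
      have Fm: "(\<lambda>(w, y). sV ((x - y) + w)) \<in> borel_measurable (W \<Otimes>\<^sub>M \<mu>)"
      proof -
        have "(\<lambda>(w::real, y::real). sV ((x - y) + w)) \<in> borel_measurable (borel \<Otimes>\<^sub>M borel)" using sVm by measurable
        then show ?thesis using measurable_cong_sets[OF sets_bb[OF sWb mu(2)] refl] by blast
      qed
      have i1: "integrable W (\<lambda>w. \<integral>y. sV ((x - y) + w) \<partial>\<mu>)"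
        by (rule intb_param[OF pW mu(1), where C=1]) (use Fm sVb in \<open>auto simp: abs_le_iff intro: order_trans\<close>)
      have "u x = (\<integral>w. sV (x + w) \<partial>W)" by (rule u_int)
      also have "\<dots> = (\<integral>w. p * (\<integral>y. sV ((x - y) + w) \<partial>\<mu>) + (1 - p) * measure \<mu> {x + w<..} \<partial>W)"
      proof (rule integral_cong_AE)
        show "(\<lambda>w. sV (x + w)) \<in> borel_measurable W" by (rule comp_meas[OF sVm sWb])
        show "(\<lambda>w. p * (\<integral>y. sV ((x - y) + w) \<partial>\<mu>) + (1 - p) * measure \<mu> {x + w<..}) \<in> borel_measurable W"
          using borel_measurable_integrable[OF i1] comp_meas(1)[OF smm sWb] by measurable
        show "AE w in W. sV (x + w) = p * (\<integral>y. sV ((x - y) + w) \<partial>\<mu>) + (1 - p) * measure \<mu> {x + w<..}"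
          using AEW
        proof (rule eventually_mono)
          fix w :: real assume "0 \<le> w"
          then have "sV (x + w) = p * (\<integral>y. sV ((x + w) - y) \<partial>\<mu>) + (1 - p) * measure \<mu> {x + w<..}"
            using x by (intro sVfix) simp
          also have "(\<lambda>y. sV ((x + w) - y)) = (\<lambda>y. sV ((x - y) + w))" by (simp add: algebra_simps)
          finally show "sV (x + w) = p * (\<integral>y. sV ((x - y) + w) \<partial>\<mu>) + (1 - p) * measure \<mu> {x + w<..}" .
        qed
      qed
      also have "\<dots> = p * (\<integral>w. (\<integral>y. sV ((x - y) + w) \<partial>\<mu>) \<partial>W) + (1 - p) * (\<integral>w. measure \<mu> {x + w<..} \<partial>W)"
        using i1 cWi[of x] by simp
      also have "(\<integral>w. (\<integral>y. sV ((x - y) + w) \<partial>\<mu>) \<partial>W) = (\<integral>y. (\<integral>w. sV ((x - y) + w) \<partial>W) \<partial>\<mu>)"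
        by (rule fubini_swap[OF pW mu(1), where C=1]) (use Fm sVb in \<open>auto simp: abs_le_iff intro: order_trans\<close>)
      also have "\<dots> = (\<integral>y. u (x - y) \<partial>\<mu>)" by (simp add: u_int)
      finally have ux: "u x = p * (\<integral>y. u (x - y) \<partial>\<mu>) + (1 - p) * (\<integral>w. measure \<mu> {x + w<..} \<partial>W)" .
      have "u x - sW x = p * ((\<integral>y. u (x - y) \<partial>\<mu>) - (\<integral>y. sW (x - y) \<partial>\<mu>))"
        unfolding ux stW[OF x] by (simp add: right_diff_distrib)
      then show ?thesis by simp
    qed
  qed
  show ?thesis using claim1 claim2 unfolding sW_def sV_def u_def by blast
qed

end
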